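(* Let $k,m$ be positive integers, $n=4k$, and let $A\in\mathbb{R}^{m\times n}$ have $2k$-restricted isometry constant $\delta_{2k}\in[\frac{\sqrt{2}}{2},1)$. Let $x\in\mathbb{R}^n$, $\epsilon\ge 0$, $e\in\mathbb{R}^m$ with $\|e\|_2\le\epsilon$, and $y=Ax+e$. For $p\in(0,1)$ let $x^{\star}$ be a solution of $\min_{\gamma\in\mathbb{R}^n}\|\gamma\|_p$ subject to $\|y-A\gamma\|_2\le\epsilon$, and let $T_0^c=\{k+1,\dots,n\}$. Let $$\bar C(p)=(1+\delta_{2k})2^{\frac p2-1}\Big(\frac{g(p)}{1-\delta_{2k}}\Big)^{p/2},\qquad \bar D(p)=\Big(\frac{2g(p)}{1-\delta_{2k}}\Big)^{p/2}.$$ Then for each $p\in(0,1)$ with $\bar C(p)<1$, $$\|x-x^{\star}\|_2^p\le \bar D_0k^{\frac p2-1}\|x_{T_0^c}\|_p^p+\bar D_1\epsilon^p,\qquad \bar D_0=\frac{2\bar D(p)}{1-\bar C(p)},\quad \bar D_1=\frac{2^p}{(1-\delta_{2k})^{\frac p2}}\Big(1+\frac{2\bar D(p)}{1-\bar C(p)}\Big).$$ In particular, if $\epsilon=0$ and $x$ is $k$-sparse, then $x^{\star}=x$.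
   Context: For $1\le s\le n$, the $s$-restricted isometry constant $\delta_s$ of $A$ is the smallest constant such that $(1-\delta_s)\|z\|_2^2\le\|Az\|_2^2\le(1+\delta_s)\|z\|_2^2$ for all $s$-sparse $z\in\mathbb{R}^n$. For $p\in(0,1)$, $\|\gamma\|_p=(\sum_i|\gamma_i|^p)^{1/p}$. For a vector $v$ and index set $T$, $v_T$ is the vector equal to $v$ on $T$ and zero elsewhere. $g(p)=\frac{p}{2}(1-\frac{p}{2})^{\frac{2}{p}-1}$. *)

theory Defs
  imports Complex_Main
begin

text \<open>Vectors in R^n are functions nat => real vanishing outside {0..<n}
  (index i corresponds to coordinate i+1 of the paper).\<close>

definition vecs :: "nat \<Rightarrow> (nat \<Rightarrow> real) set" where
  "vecs n = {z. \<forall>i\<ge>n. z i = 0}"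

definition mulv :: "nat \<Rightarrow> nat \<Rightarrow> (nat \<Rightarrow> nat \<Rightarrow> real) \<Rightarrow> (nat \<Rightarrow> real) \<Rightarrow> (nat \<Rightarrow> real)" where
  "mulv m n A z = (\<lambda>i. if i < m then (\<Sum>j<n. A i j * z j) else 0)"

definition norm2 :: "nat \<Rightarrow> (nat \<Rightarrow> real) \<Rightarrow> real" where
  "norm2 n z = sqrt (\<Sum>i<n. (z i)\<^sup>2)"

definition pnorm :: "nat \<Rightarrow> real \<Rightarrow> (nat \<Rightarrow> real) \<Rightarrow> real" where
  "pnorm n p z = (\<Sum>i<n. \<bar>z i\<bar> powr p) powr (1 / p)"

definition sparse :: "nat \<Rightarrow> nat \<Rightarrow> (nat \<Rightarrow> real) \<Rightarrow> bool" where
  "sparse n s z \<longleftrightarrow> z \<in> vecs n \<and> card {i. i < n \<and> z i \<noteq> 0} \<le> s"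

definition restr :: "nat set \<Rightarrow> (nat \<Rightarrow> real) \<Rightarrow> (nat \<Rightarrow> real)" where
  "restr T v = (\<lambda>i. if i \<in> T then v i else 0)"

definition ric :: "nat \<Rightarrow> nat \<Rightarrow> (nat \<Rightarrow> nat \<Rightarrow> real) \<Rightarrow> nat \<Rightarrow> real" where
  "ric m n A s = Inf {d. \<forall>z. sparse n s z \<longrightarrow>
      (1 - d) * (norm2 n z)\<^sup>2 \<le> (norm2 m (mulv m n A z))\<^sup>2 \<and>
      (norm2 m (mulv m n A z))\<^sup>2 \<le> (1 + d) * (norm2 n z)\<^sup>2}"

definition g :: "real \<Rightarrow> real" where
  "g p = p / 2 * (1 - p / 2) powr (2 / p - 1)"

end

theory Submission
  imports Defs "HOL-Analysis.Convex" "HOL-Analysis.L2_Norm"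
begin

lemma powr_subadd:
  fixes a b p :: real
  assumes "0 \<le> a" "0 \<le> b" "0 < p" "p \<le> 1"
  shows "(a + b) powr p \<le> a powr p + b powr p"
proof (cases "a + b = 0")
  case True then show ?thesis using assms by simp
next
  case False
  then have s: "a + b > 0" using assms by simp
  have "(a+b) * (a+b) powr (p-1) = (a+b) powr p"
    using powr_mult_base[of "a+b" "p-1"] s by simp
  then have e: "(a+b) powr p = a * (a+b) powr (p-1) + b * (a+b) powr (p-1)"
    by (simp add: algebra_simps)
  have 1: "a * (a+b) powr (p-1) \<le> a powr p"
  proof (cases "a = 0")
    case False
    then have "(a+b) powr (p-1) \<le> a powr (p-1)"
      using assms by (intro powr_mono2') auto
    then have "a * (a+b) powr (p-1) \<le> a * a powr (p-1)" using assms by (simp add: mult_left_mono)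
    also have "\<dots> = a powr p" using False assms by (simp add: powr_diff)
    finally show ?thesis .
  qed simp
  have 2: "b * (a+b) powr (p-1) \<le> b powr p"
  proof (cases "b = 0")
    case False
    then have "(a+b) powr (p-1) \<le> b powr (p-1)"
      using assms by (intro powr_mono2') auto
    then have "b * (a+b) powr (p-1) \<le> b * b powr (p-1)" using assms by (simp add: mult_left_mono)
    also have "\<dots> = b powr p" using False assms by (simp add: powr_diff)
    finally show ?thesis .
  qed simp
  show ?thesis using e 1 2 by linarith
qed

lemma abs_powr_tri:
  fixes a b p :: real
  assumes "0 < p" "p \<le> 1"
  shows "\<bar>a + b\<bar> powr p \<le> \<bar>a\<bar> powr p + \<bar>b\<bar> powr p"
proof -
  have "\<bar>a + b\<bar> powr p \<le> (\<bar>a\<bar> + \<bar>b\<bar>) powr p"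
    using assms by (intro powr_mono2) auto
  also have "\<dots> \<le> \<bar>a\<bar> powr p + \<bar>b\<bar> powr p" using assms by (intro powr_subadd) auto
  finally show ?thesis .
qed

lemma power_mean:
  fixes f :: "nat \<Rightarrow> real" and p :: real
  assumes "finite I" "card I = k" "k > 0" "0 < p" "p < 2"
  shows "(\<Sum>i\<in>I. \<bar>f i\<bar> powr p) \<le> real k powr (1 - p/2) * (\<Sum>i\<in>I. (f i)\<^sup>2) powr (p/2)"
proof (cases "(\<Sum>i\<in>I. (f i)\<^sup>2) = 0")
  case True
  then have "\<forall>i\<in>I. f i = 0" using assms(1) by (simp add: sum_nonneg_eq_0_iff)
  then show ?thesis using True assms by simp
next
  case False
  define F where "F = (\<Sum>i\<in>I. (f i)\<^sup>2)"
  have F: "F > 0" using False F_def by (simp add: sum_nonneg order_le_neq_trans)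
  have kp: "real k > 0" using assms by simp
  have each: "(((f i)\<^sup>2 / F) powr (p/2)) * (1 / real k) powr (1 - p/2)
        \<le> (p/2) * ((f i)\<^sup>2 / F) + (1 - p/2) * (1 / real k)" for i
  proof (cases "f i = 0")
    case True then show ?thesis using assms kp by simp
  next
    case False
    show ?thesis
      by (rule Youngs_inequality_0) (use assms kp F False in auto)
  qed
  have "(\<Sum>i\<in>I. (((f i)\<^sup>2 / F) powr (p/2)) * (1 / real k) powr (1 - p/2))
      \<le> (\<Sum>i\<in>I. (p/2) * ((f i)\<^sup>2 / F) + (1 - p/2) * (1 / real k))"
    by (intro sum_mono each)
  also have "\<dots> = (p/2) * (F / F) + (1 - p/2)"
    using assms kp by (simp add: sum.distrib sum_distrib_left[symmetric] sum_divide_distrib[symmetric] F_def)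
  also have "\<dots> = 1" using F by simp
  finally have A: "(\<Sum>i\<in>I. (((f i)\<^sup>2 / F) powr (p/2)) * (1 / real k) powr (1 - p/2)) \<le> 1" .
  have eq: "((f i)\<^sup>2 / F) powr (p/2) = \<bar>f i\<bar> powr p / F powr (p/2)" for i
  proof -
    have "((f i)\<^sup>2 / F) powr (p/2) = ((f i)\<^sup>2) powr (p/2) / F powr (p/2)" by (simp add: powr_divide)
    also have "((f i)\<^sup>2) powr (p/2) = \<bar>f i\<bar> powr p"
    proof -
      have "(f i)\<^sup>2 = \<bar>f i\<bar> powr 2" by simp
      then have "((f i)\<^sup>2) powr (p/2) = (\<bar>f i\<bar> powr 2) powr (p/2)" by metis
      also have "\<dots> = \<bar>f i\<bar> powr p" unfolding powr_powr by simp
      finally show ?thesis .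
    qed
    finally show ?thesis .
  qed
  have "(\<Sum>i\<in>I. (((f i)\<^sup>2 / F) powr (p/2)) * (1 / real k) powr (1 - p/2))
     = (\<Sum>i\<in>I. \<bar>f i\<bar> powr p) / (F powr (p/2) * real k powr (1 - p/2))"
  proof -
    have "\<And>i. (((f i)\<^sup>2 / F) powr (p/2)) * (1 / real k) powr (1 - p/2)
       = \<bar>f i\<bar> powr p / (F powr (p/2) * real k powr (1 - p/2))"
      unfolding eq using kp by (simp add: powr_divide)
    then show ?thesis by (simp add: sum_divide_distrib)
  qed
  with A have "(\<Sum>i\<in>I. \<bar>f i\<bar> powr p) \<le> F powr (p/2) * real k powr (1 - p/2)"
    using F kp by (simp add: divide_le_eq)
  then show ?thesis by (simp add: F_def mult.commute)
qed

lemma g_nonneg: "0 < p \<Longrightarrow> p < 1 \<Longrightarrow> 0 \<le> g p"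
  unfolding g_def by simp

lemma gbound:
  fixes p t :: real
  assumes "0 < p" "p < 1" "0 \<le> t"
  shows "t powr (2/p - 1) * (1 - t) \<le> g p"
proof -
  consider "t = 0" | "1 \<le> t" | "0 < t" "t < 1" using assms by linarith
  then show ?thesis
  proof cases
    case 1 then show ?thesis using g_nonneg assms by simp
  next
    case 2
    then have "t powr (2/p - 1) * (1 - t) \<le> 0" by (simp add: mult_nonneg_nonpos)
    moreover have "0 \<le> g p" using g_nonneg assms by blast
    ultimately show ?thesis by linarith
  next
    case 3
    define a where "a = t / (1 - p/2)"
    define b where "b = (1 - t) / (p/2)"
    have a: "a > 0" using 3 assms a_def by simp
    have b: "b > 0" using 3 assms b_def by simp
    have "a powr (1 - p/2) * b powr (p/2) \<le> (1 - p/2) * a + (p/2) * b"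
      by (rule Youngs_inequality_0) (use assms a b in auto)
    also have "\<dots> = 1" using assms by (simp add: a_def b_def field_simps)
    finally have Y: "a powr (1 - p/2) * b powr (p/2) \<le> 1" .
    have "(a powr (1 - p/2) * b powr (p/2)) powr (2/p) \<le> 1 powr (2/p)"
      using Y assms by (intro powr_mono2) auto
    moreover have "(a powr (1 - p/2) * b powr (p/2)) powr (2/p) = a powr (2/p - 1) * b"
    proof -
      have "(a powr (1 - p/2) * b powr (p/2)) powr (2/p) = a powr ((1 - p/2) * (2/p)) * b powr (p/2 * (2/p))"
        by (simp add: powr_mult powr_powr)
      also have "(1 - p/2) * (2/p) = 2/p - 1" using assms by (simp add: field_simps)
      also have "p/2 * (2/p) = 1" using assms by simp
      finally show ?thesis using b by simp
    qed
    ultimately have "a powr (2/p - 1) * b \<le> 1" by simp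
    moreover have "a powr (2/p - 1) * b = (t powr (2/p - 1) * (1 - t)) / ((1 - p/2) powr (2/p - 1) * (p/2))"
      by (simp add: a_def b_def powr_divide)
    ultimately have "(t powr (2/p - 1) * (1 - t)) / ((1 - p/2) powr (2/p - 1) * (p/2)) \<le> 1" by simp
    moreover have "(1 - p/2) powr (2/p - 1) * (p/2) > 0" using assms by simp
    ultimately have "t powr (2/p - 1) * (1 - t) \<le> (1 - p/2) powr (2/p - 1) * (p/2)"
      by (simp add: divide_le_eq)
    then show ?thesis by (simp add: g_def mult.commute)
  qed
qed

lemma top_subset:
  fixes f :: "nat \<Rightarrow> real"
  assumes "finite U" "k \<le> card U"
  shows "\<exists>T\<subseteq>U. card T = k \<and> (\<forall>i\<in>T. \<forall>j\<in>U-T. f j \<le> f i)"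
  using assms(2)
proof (induction k)
  case 0 then show ?case by (intro exI[of _ "{}"]) auto
next
  case (Suc k)
  then obtain T where T: "T \<subseteq> U" "card T = k" "\<forall>i\<in>T. \<forall>j\<in>U-T. f j \<le> f i" by auto
  have fin: "finite (U - T)" using assms by simp
  have "card (U - T) = card U - k" using T assms by (simp add: card_Diff_subset finite_subset)
  then have ne: "U - T \<noteq> {}" using Suc.prems by (metis Suc_le_lessD card.empty zero_less_diff less_nat_zero_code)
  define M where "M = Max (f ` (U - T))"
  have "M \<in> f ` (U - T)" unfolding M_def using fin ne by simp
  then obtain i0 where i0: "i0 \<in> U - T" "f i0 = M" by auto
  have mx: "\<forall>j\<in>U-T. f j \<le> M" unfolding M_def using fin by simp
  show ?case
  proof (intro exI[of _ "insert i0 T"] conjI)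
    show "insert i0 T \<subseteq> U" using T i0 by auto
    show "card (insert i0 T) = Suc k" using T i0 assms by (simp add: finite_subset)
    show "\<forall>i\<in>insert i0 T. \<forall>j\<in>U - insert i0 T. f j \<le> f i" using T mx i0 by auto
  qed
qed

lemma norm2_sq: "(norm2 n z)\<^sup>2 = (\<Sum>i<n. (z i)\<^sup>2)"
  unfolding norm2_def by (simp add: sum_nonneg)

lemma norm2_nonneg: "0 \<le> norm2 n z"
  unfolding norm2_def by (simp add: sum_nonneg)

lemma norm2_L2: "norm2 n z = L2_set z {..<n}"
  unfolding norm2_def L2_set_def by simp

lemma norm2_tri: "norm2 n (\<lambda>i. a i + b i) \<le> norm2 n a + norm2 n b"
  unfolding norm2_L2 by (rule L2_set_triangle_ineq)

lemma norm2_minus: "norm2 n (\<lambda>i. - a i) = norm2 n a"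
  unfolding norm2_def by simp

lemma mulv_add: "mulv m n A (\<lambda>i. a i + b i) = (\<lambda>i. mulv m n A a i + mulv m n A b i)"
  unfolding mulv_def by (auto simp: algebra_simps sum.distrib)

lemma mulv_bound:
  "(norm2 m (mulv m n A z))\<^sup>2 \<le> (\<Sum>i<m. \<Sum>j<n. (A i j)\<^sup>2) * (norm2 n z)\<^sup>2"
proof -
  have "(norm2 m (mulv m n A z))\<^sup>2 = (\<Sum>i<m. (\<Sum>j<n. A i j * z j)\<^sup>2)"
    unfolding norm2_sq mulv_def by simp
  also have "\<dots> \<le> (\<Sum>i<m. (\<Sum>j<n. (A i j)\<^sup>2) * (\<Sum>j<n. (z j)\<^sup>2))"
    by (intro sum_mono Cauchy_Schwarz_ineq_sum)
  also have "\<dots> = (\<Sum>i<m. \<Sum>j<n. (A i j)\<^sup>2) * (norm2 n z)\<^sup>2"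
    by (simp add: norm2_sq sum_distrib_right)
  finally show ?thesis .
qed

definition ricset where
  "ricset m n A s = {d. \<forall>z. sparse n s z \<longrightarrow>
      (1 - d) * (norm2 n z)\<^sup>2 \<le> (norm2 m (mulv m n A z))\<^sup>2 \<and>
      (norm2 m (mulv m n A z))\<^sup>2 \<le> (1 + d) * (norm2 n z)\<^sup>2}"

lemma ricset_ne: "1 + (\<Sum>i<m. \<Sum>j<n. (A i j)\<^sup>2) \<in> ricset m n A s"
proof -
  define C where "C = (\<Sum>i<m. \<Sum>j<n. (A i j)\<^sup>2)"
  have C: "C \<ge> 0" unfolding C_def by (simp add: sum_nonneg)
  have L: "(1 - (1 + C)) * (norm2 n z)\<^sup>2 \<le> (norm2 m (mulv m n A z))\<^sup>2" for z
  proof -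
    have "(1 - (1 + C)) * (norm2 n z)\<^sup>2 \<le> 0" using C by (simp add: mult_nonpos_nonneg)
    also have "0 \<le> (norm2 m (mulv m n A z))\<^sup>2" by simp
    finally show ?thesis .
  qed
  have U: "(norm2 m (mulv m n A z))\<^sup>2 \<le> (1 + (1 + C)) * (norm2 n z)\<^sup>2" for z
  proof -
    have "(norm2 m (mulv m n A z))\<^sup>2 \<le> C * (norm2 n z)\<^sup>2" unfolding C_def by (rule mulv_bound)
    also have "\<dots> \<le> (1 + (1 + C)) * (norm2 n z)\<^sup>2" by (simp add: mult_right_mono)
    finally show ?thesis .
  qed
  show ?thesis unfolding ricset_def C_def[symmetric] using L U by blast
qed

lemma ric_eq: "ric m n A s = Inf (ricset m n A s)"
  unfolding ric_def ricset_def by simp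

lemma ric_lower:
  assumes "sparse n s z"
  shows "(1 - ric m n A s) * (norm2 n z)\<^sup>2 \<le> (norm2 m (mulv m n A z))\<^sup>2"
proof (cases "norm2 n z = 0")
  case True then show ?thesis by simp
next
  case False
  define N where "N = (norm2 n z)\<^sup>2"
  define M where "M = (norm2 m (mulv m n A z))\<^sup>2"
  have N: "N > 0" using False norm2_nonneg[of n z] unfolding N_def by simp
  have "1 - M / N \<le> Inf (ricset m n A s)"
  proof (rule cInf_greatest)
    show "ricset m n A s \<noteq> {}" using ricset_ne by blast
    fix d assume "d \<in> ricset m n A s"
    then have "(1 - d) * N \<le> M" using assms unfolding ricset_def N_def M_def by blast
    then show "1 - M / N \<le> d" using N by (simp add: field_simps)
  qed
  then show ?thesis using N unfolding ric_eq N_def[symmetric] M_def[symmetric] by (simp add: field_simps)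
qed

lemma ric_upper:
  assumes "sparse n s z"
  shows "(norm2 m (mulv m n A z))\<^sup>2 \<le> (1 + ric m n A s) * (norm2 n z)\<^sup>2"
proof (cases "norm2 n z = 0")
  case True
  have "1 + (\<Sum>i<m. \<Sum>j<n. (A i j)\<^sup>2) \<in> ricset m n A s" by (rule ricset_ne)
  then have "(norm2 m (mulv m n A z))\<^sup>2 \<le> 0" using assms True unfolding ricset_def by force
  then show ?thesis using True by simp
next
  case False
  define N where "N = (norm2 n z)\<^sup>2"
  define M where "M = (norm2 m (mulv m n A z))\<^sup>2"
  have N: "N > 0" using False norm2_nonneg[of n z] unfolding N_def by simp
  have "M / N - 1 \<le> Inf (ricset m n A s)"
  proof (rule cInf_greatest)
    show "ricset m n A s \<noteq> {}" using ricset_ne by blast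
    fix d assume "d \<in> ricset m n A s"
    then have "M \<le> (1 + d) * N" using assms unfolding ricset_def N_def M_def by blast
    then show "M / N - 1 \<le> d" using N by (simp add: field_simps)
  qed
  then show ?thesis using N unfolding ric_eq N_def[symmetric] M_def[symmetric] by (simp add: field_simps)
qed

lemma stepA:
  fixes p K a S :: real
  assumes "0 < p" "p < 1" "0 < K" "0 \<le> a" "a \<le> S"
  shows "(S - a) * (a / K) powr (2/p - 1) \<le> g p * S powr (2/p) / K powr (2/p - 1)"
proof (cases "S = 0")
  case True
  then have "a = 0" using assms by simp
  then show ?thesis using True assms by simp
next
  case False
  then have S: "S > 0" using assms by simp
  define t where "t = a / S"
  have t: "0 \<le> t" using assms S t_def by simp
  have a: "a = t * S" using S t_def by simp
  have "(S - a) * (a / K) powr (2/p - 1) = (t powr (2/p - 1) * (1 - t)) * (S * S powr (2/p - 1)) / K powr (2/p - 1)"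
    unfolding a by (simp add: powr_divide powr_mult algebra_simps)
  also have "S * S powr (2/p - 1) = S powr (2/p)"
    using powr_mult_base[of S "2/p - 1"] S by simp
  also have "(t powr (2/p - 1) * (1 - t)) * S powr (2/p) / K powr (2/p - 1) \<le> g p * S powr (2/p) / K powr (2/p - 1)"
    using gbound[OF assms(1,2) t] assms by (intro divide_right_mono mult_right_mono) auto
  finally show ?thesis .
qed

lemma stepB:
  fixes p d a S :: real
  assumes "0 < p" "p < 1" "0 \<le> d" "0 \<le> a" "a \<le> S"
  shows "a powr (2/p - 1) * ((1+d)*S - 2*a) \<le> 2 powr (1 - 2/p) * (1+d) powr (2/p) * g p * S powr (2/p)"
proof (cases "S = 0")
  case True
  then have "a = 0" using assms by simp
  then show ?thesis using True assms by simp
next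
  case False
  then have S: "S > 0" using assms by simp
  define P where "P = (1+d)*S/2"
  have P: "P > 0" unfolding P_def using S assms by (simp add: add_pos_nonneg)
  define t where "t = a / P"
  have t: "0 \<le> t" using assms P t_def by simp
  have a: "a = t * P" using P t_def by simp
  have "a powr (2/p - 1) * ((1+d)*S - 2*a) = 2 * (t powr (2/p - 1) * (1 - t)) * (P * P powr (2/p - 1))"
  proof -
    have e: "(1+d)*S = 2*P" unfolding P_def by simp
    show ?thesis unfolding e unfolding a by (simp add: powr_mult algebra_simps)
  qed
  also have "P * P powr (2/p - 1) = P powr (2/p)"
    using powr_mult_base[of P "2/p - 1"] P by simp
  also have "2 * (t powr (2/p - 1) * (1 - t)) * P powr (2/p) \<le> 2 * g p * P powr (2/p)"
    using gbound[OF assms(1,2) t] by (intro mult_right_mono) auto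
  also have "2 * g p * P powr (2/p) = 2 powr (1 - 2/p) * (1+d) powr (2/p) * g p * S powr (2/p)"
  proof -
    have "P powr (2/p) = (1+d) powr (2/p) * S powr (2/p) / 2 powr (2/p)"
      unfolding P_def using assms S by (simp add: powr_divide powr_mult)
    moreover have "2 powr (1 - 2/p) = 2 / 2 powr (2/p)" by (simp add: powr_diff)
    ultimately show ?thesis by simp
  qed
  finally show ?thesis .
qed

lemma powr_sqrt: "0 \<le> x \<Longrightarrow> x powr (p/2) = sqrt x powr p"
  by (simp add: powr_half_sqrt[symmetric] powr_powr)

lemma alg1:
  fixes Db Ky Kx X Ae D :: real
  assumes "D \<noteq> 0"
  shows "Db * Ky * ((2*X + 2 * Kx * Ae) / D) = (2 * Db / D) * Ky * X + (2 * Db / D) * Ae * (Ky * Kx)"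
  using assms by (simp add: field_simps)

lemma core:
  fixes p d K e S a X Sx Z2 B2 V2 :: real
  assumes p: "0 < p" "p < 1" and d: "0 \<le> d" "d < 1" and K: "0 < K" and e: "0 \<le> e"
    and a: "0 \<le> a" "a \<le> S" and nn: "0 \<le> Z2" "0 \<le> B2" "0 \<le> V2"
    and h1: "(1-d)*(Z2+B2) \<le> (2*e + sqrt((1+d)*V2))\<^sup>2"
    and h2: "V2 \<le> (S-a)*(a/K) powr (2/p-1)"
    and h3: "a \<le> K powr (1-p/2) * B2 powr (p/2)"
    and h4: "Sx \<le> K powr (1-p/2) * Z2 powr (p/2)"
    and h5: "S \<le> Sx + 2*X"
  defines "Cb \<equiv> (1 + d) * 2 powr (p / 2 - 1) * (g p / (1 - d)) powr (p / 2)"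
  defines "Db \<equiv> (2 * g p / (1 - d)) powr (p / 2)"
  assumes Cb: "Cb < 1"
  shows "(Z2+B2+V2) powr (p/2)
           \<le> (2 * Db / (1 - Cb)) * K powr (p / 2 - 1) * X
             + (2 powr p / (1 - d) powr (p / 2)) * (1 + 2 * Db / (1 - Cb)) * e powr p"
proof -
  define q where "q = 2/p - 1"
  have q: "q > 0" using p unfolding q_def by (simp add: field_simps)
  have qp: "q * (p/2) = 1 - p/2" using p unfolding q_def by (simp add: field_simps)
  have g0: "0 \<le> g p" using g_nonneg p by blast
  define E where "E = g p * S powr (2/p) / K powr q"
  have E0: "0 \<le> E" unfolding E_def using g0 by simp
  define W2 where "W2 = 2 powr (1-2/p) * (1+d) powr (2/p) * E"
  have W0: "0 \<le> W2" unfolding W2_def using E0 by simp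
  have V2E: "V2 \<le> E" using h2 stepA[OF p K a] unfolding E_def q_def by simp
  have B2lb: "a powr (2/p) / K powr q \<le> B2"
  proof -
    have "a powr (2/p) \<le> (K powr (1-p/2) * B2 powr (p/2)) powr (2/p)"
      using h3 a p by (intro powr_mono2) auto
    also have "\<dots> = K powr ((1-p/2)*(2/p)) * B2 powr ((p/2)*(2/p))"
      by (simp add: powr_mult powr_powr)
    also have "(1-p/2)*(2/p) = q" unfolding q_def using p by (simp add: field_simps)
    also have "(p/2)*(2/p) = 1" using p by simp
    finally show ?thesis using K nn by (simp add: divide_le_eq mult.commute)
  qed
  have diffB: "(1+d)*V2 - (1-d)*B2 \<le> W2"
  proof -
    have aq: "a powr (2/p) = a * a powr q"
      using powr_mult_base[of a q] a unfolding q_def by simp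
    have "(1+d)*V2 \<le> (1+d)*((S-a)*(a/K) powr q)" using h2 d unfolding q_def by (simp add: mult_left_mono)
    also have "\<dots> = (1+d)*(S-a)*a powr q / K powr q" by (simp add: powr_divide)
    finally have 1: "(1+d)*V2 \<le> (1+d)*(S-a)*a powr q / K powr q" .
    have 2: "(1-d)*(a * a powr q / K powr q) \<le> (1-d)*B2" using mult_left_mono[OF B2lb[unfolded aq], of "1-d"] d by simp
    have "(1+d)*V2 - (1-d)*B2 \<le> (1+d)*(S-a)*a powr q / K powr q - (1-d)*(a * a powr q / K powr q)"
      using 1 2 by linarith
    also have "\<dots> = a powr q * ((1+d)*S - 2*a) / K powr q"
    proof -
      have "K powr q > 0" using K by simp
      then show ?thesis by (simp add: field_simps)
    qed
    also have "\<dots> \<le> 2 powr (1 - 2/p) * (1+d) powr (2/p) * g p * S powr (2/p) / K powr q"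
      using stepB[OF p d(1) a] K unfolding q_def by (intro divide_right_mono) auto
    also have "\<dots> = W2" unfolding W2_def E_def by simp
    finally show ?thesis .
  qed
  define M where "M = sqrt (2 powr q)"
  have M1: "1 \<le> M"
  proof -
    have "(2::real) powr 0 \<le> 2 powr q" using q by (intro powr_mono) auto
    then show ?thesis unfolding M_def by simp
  qed
  define w where "w = sqrt W2"
  have w0: "0 \<le> w" unfolding w_def using W0 by simp
  have ww: "w\<^sup>2 = W2" unfolding w_def by (rule real_sqrt_pow2[OF W0])
  have sV: "sqrt((1+d)*V2) \<le> M*w"
  proof -
    have "(1+d)*V2 \<le> (1+d)*E" using V2E d by (simp add: mult_left_mono)
    also have "(1+d) \<le> (1+d) powr (2/p)"
    proof -
      have "(1+d) powr 1 \<le> (1+d) powr (2/p)" using p d by (intro powr_mono) (auto simp: field_simps)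
      then show ?thesis using d by simp
    qed
    then have "(1+d)*E \<le> (1+d) powr (2/p) * E" using E0 by (simp add: mult_right_mono)
    also have "(1+d) powr (2/p) * E = 2 powr q * W2"
    proof -
      have "2 powr q * 2 powr (1-2/p) = (1::real)" unfolding q_def by (simp flip: powr_add)
      then show ?thesis unfolding W2_def by (metis (no_types, lifting) mult.assoc mult_1)
    qed
    finally have "(1+d)*V2 \<le> 2 powr q * W2" .
    then have "sqrt((1+d)*V2) \<le> sqrt(2 powr q * W2)" by simp
    also have "\<dots> = M*w" unfolding M_def w_def by (simp add: real_sqrt_mult)
    finally show ?thesis .
  qed
  have Zb: "(1-d)*Z2 \<le> (2*e*M + w)\<^sup>2"
  proof -
    define s where "s = sqrt((1+d)*V2)"
    have ss: "s\<^sup>2 = (1+d)*V2" unfolding s_def using d nn by simp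
    have s0: "0 \<le> s" unfolding s_def using d nn by simp
    have "(1-d)*Z2 \<le> (2*e + s)\<^sup>2 - (1-d)*B2" using h1 unfolding s_def by (simp add: algebra_simps)
    also have "\<dots> = 4*e\<^sup>2 + 4*e*s + ((1+d)*V2 - (1-d)*B2)" using ss by (simp add: power2_eq_square algebra_simps)
    also have "\<dots> \<le> 4*e\<^sup>2 + 4*e*(M*w) + W2"
      using diffB sV e unfolding s_def by (intro add_mono mult_left_mono) auto
    also have "\<dots> \<le> (2*e*M + w)\<^sup>2"
    proof -
      have "1 \<le> M\<^sup>2" using M1 by (simp add: one_le_power)
      then have "e\<^sup>2 * 1 \<le> e\<^sup>2 * M\<^sup>2" by (intro mult_left_mono) auto
      then have "e\<^sup>2 \<le> e\<^sup>2 * M\<^sup>2" by simp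
      then show ?thesis using ww by (simp add: power2_eq_square algebra_simps)
    qed
    finally show ?thesis .
  qed
  define Ae where "Ae = (2*e) powr p / (1-d) powr (p/2)"
  have Ae0: "0 \<le> Ae" unfolding Ae_def by simp
  have dp: "(1-d) powr (p/2) > 0" using d by simp
  have Zp: "Z2 powr (p/2) * (1-d) powr (p/2) \<le> 2 * (2*e) powr p + W2 powr (p/2)"
  proof -
    have "Z2 powr (p/2) * (1-d) powr (p/2) = ((1-d)*Z2) powr (p/2)" by (simp add: powr_mult mult.commute)
    also have "\<dots> = sqrt((1-d)*Z2) powr p" using d nn by (intro powr_sqrt) simp
    also have "\<dots> \<le> (2*e*M + w) powr p"
    proof -
      have "sqrt((1-d)*Z2) \<le> sqrt((2*e*M + w)\<^sup>2)" using real_sqrt_le_mono[OF Zb] .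
      also have "\<dots> = 2*e*M + w" using e M1 w0 by simp
      finally show ?thesis using p d nn by (intro powr_mono2) auto
    qed
    also have "\<dots> \<le> (2*e*M) powr p + w powr p" using p e M1 w0 by (intro powr_subadd) auto
    also have "(2*e*M) powr p = (2*e) powr p * 2 powr (1 - p/2)"
    proof -
      have "M powr p = 2 powr (1 - p/2)"
        unfolding M_def by (simp add: powr_half_sqrt[symmetric] powr_powr qp[symmetric] mult.commute)
      then show ?thesis by (simp add: powr_mult)
    qed
    also have "(2*e) powr p * 2 powr (1 - p/2) \<le> (2*e) powr p * 2"
    proof -
      have "2 powr (1 - p/2) \<le> 2 powr (1::real)" using p by (intro powr_mono) auto
      then show ?thesis by (simp add: mult_left_mono)
    qed
    also have "w powr p = W2 powr (p/2)" unfolding w_def using W0 by (simp add: powr_sqrt)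
    finally show ?thesis by simp
  qed
  have EP: "E powr (p/2) = g p powr (p/2) * S * K powr (p/2 - 1)"
  proof -
    have S0: "0 \<le> S" using a by simp
    have "E powr (p/2) = g p powr (p/2) * (S powr (2/p)) powr (p/2) / (K powr q) powr (p/2)"
      unfolding E_def by (simp add: powr_mult powr_divide)
    also have "(S powr (2/p)) powr (p/2) = S" using p S0 by (simp add: powr_powr)
    also have "(K powr q) powr (p/2) = K powr (1 - p/2)" by (simp only: powr_powr qp)
    finally have 1: "E powr (p/2) = g p powr (p/2) * S / K powr (1 - p/2)" .
    have 2: "K powr (p/2 - 1) * K powr (1 - p/2) = 1" using K by (simp flip: powr_add)
    have Kx: "K powr (1 - p/2) > 0" using K by simp
    have "g p powr (p/2) * S / K powr (1-p/2) = g p powr (p/2) * S * (K powr (p/2-1) * K powr (1-p/2)) / K powr (1-p/2)"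
      unfolding 2 by simp
    also have "\<dots> = g p powr (p/2) * S * K powr (p/2-1)" using Kx by simp
    finally show ?thesis unfolding 1 .
  qed
  have I3: "W2 powr (p/2) / (1-d) powr (p/2) = Cb * S * K powr (p/2 - 1)"
  proof -
    have "W2 powr (p/2) = 2 powr ((1-2/p)*(p/2)) * (1+d) powr ((2/p)*(p/2)) * E powr (p/2)"
      unfolding W2_def by (simp add: powr_mult powr_powr)
    also have "(1-2/p)*(p/2) = p/2 - 1" using p by (simp add: field_simps)
    also have "(2/p)*(p/2) = 1" using p by simp
    finally have "W2 powr (p/2) = 2 powr (p/2 - 1) * (1+d) * E powr (p/2)" using d by simp
    then show ?thesis unfolding EP Cb_def using d by (simp add: powr_divide)
  qed
  have Sb: "(1 - Cb) * S \<le> 2*X + 2 * K powr (1-p/2) * Ae"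
  proof -
    have "Z2 powr (p/2) \<le> (2 * (2*e) powr p + W2 powr (p/2)) / (1-d) powr (p/2)"
      using Zp dp by (simp add: le_divide_eq)
    also have "\<dots> = 2 * Ae + Cb * S * K powr (p/2 - 1)" unfolding Ae_def I3[symmetric] by (simp add: add_divide_distrib)
    finally have "Z2 powr (p/2) \<le> 2 * Ae + Cb * S * K powr (p/2 - 1)" .
    then have "K powr (1-p/2) * Z2 powr (p/2) \<le> K powr (1-p/2) * (2 * Ae + Cb * S * K powr (p/2 - 1))"
      by (simp add: mult_left_mono)
    also have "\<dots> = 2 * K powr (1-p/2) * Ae + Cb * S * (K powr (1-p/2) * K powr (p/2 - 1))" by (simp add: algebra_simps)
    also have "K powr (1-p/2) * K powr (p/2 - 1) = 1" using K by (simp flip: powr_add)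
    finally show ?thesis using h4 h5 by (simp add: algebra_simps)
  qed
  have Hb: "(Z2+B2+V2) powr (p/2) \<le> Ae + Db * K powr (p/2 - 1) * S"
  proof -
    define v where "v = sqrt V2"
    have v0: "0 \<le> v" unfolding v_def using nn by simp
    have vv: "v\<^sup>2 = V2" unfolding v_def using nn by simp
    define s where "s = sqrt((1+d)*V2)"
    have ss: "s\<^sup>2 = (1+d)*V2" unfolding s_def using d nn by simp
    have s0: "0 \<le> s" unfolding s_def using d nn by simp
    have s2: "s \<le> sqrt 2 * v" unfolding s_def v_def using d nn by (simp add: real_sqrt_mult[symmetric] mult_right_mono)
    have "(1-d)*(Z2+B2+V2) \<le> (2*e + s)\<^sup>2 + (1-d)*V2" using h1 unfolding s_def by (simp add: algebra_simps)
    also have "\<dots> = 4*e\<^sup>2 + 4*e*s + 2*V2" using ss by (simp add: power2_eq_square algebra_simps)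
    also have "\<dots> \<le> 4*e\<^sup>2 + 4*e*(sqrt 2 * v) + 2*V2" using s2 e by (simp add: mult_left_mono)
    also have "\<dots> = (2*e + sqrt 2 * v)\<^sup>2" using vv by (simp add: power2_eq_square algebra_simps)
    finally have H: "(1-d)*(Z2+B2+V2) \<le> (2*e + sqrt 2 * v)\<^sup>2" .
    have "(Z2+B2+V2) powr (p/2) * (1-d) powr (p/2) = ((1-d)*(Z2+B2+V2)) powr (p/2)" by (simp add: powr_mult mult.commute)
    also have "\<dots> = sqrt((1-d)*(Z2+B2+V2)) powr p" using d nn by (intro powr_sqrt) simp
    also have "\<dots> \<le> (2*e + sqrt 2 * v) powr p"
    proof -
      have "sqrt((1-d)*(Z2+B2+V2)) \<le> sqrt((2*e + sqrt 2 * v)\<^sup>2)" using real_sqrt_le_mono[OF H] .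
      also have "\<dots> = 2*e + sqrt 2 * v" using e v0 by simp
      finally show ?thesis using p d nn by (intro powr_mono2) auto
    qed
    also have "\<dots> \<le> (2*e) powr p + (sqrt 2 * v) powr p" using p e v0 by (intro powr_subadd) auto
    also have "(2*e) powr p + (sqrt 2 * v) powr p \<le> (2*e) powr p + 2 powr (p/2) * E powr (p/2)"
    proof -
      have "(sqrt 2 * v) powr p = 2 powr (p/2) * V2 powr (p/2)"
        unfolding v_def using nn by (simp add: powr_mult powr_sqrt)
      also have "\<dots> \<le> 2 powr (p/2) * E powr (p/2)" using V2E nn p by (intro mult_left_mono powr_mono2) auto
      finally show ?thesis by simp
    qed
    finally have "(Z2+B2+V2) powr (p/2) * (1-d) powr (p/2) \<le> (2*e) powr p + 2 powr (p/2) * E powr (p/2)" .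
    then have "(Z2+B2+V2) powr (p/2) \<le> ((2*e) powr p + 2 powr (p/2) * E powr (p/2)) / (1-d) powr (p/2)"
      using dp by (simp add: le_divide_eq)
    also have "\<dots> = Ae + Db * K powr (p/2 - 1) * S"
      unfolding Ae_def EP Db_def using d g0 by (simp add: add_divide_distrib powr_mult powr_divide)
    finally show ?thesis .
  qed
  have Db0: "0 \<le> Db" unfolding Db_def by simp
  have C1: "0 < 1 - Cb" using Cb by simp
  have Kp: "0 \<le> K powr (p/2 - 1)" by simp
  have Sle: "S \<le> (2*X + 2 * K powr (1-p/2) * Ae) / (1 - Cb)" using Sb C1 by (simp add: le_divide_eq mult.commute)
  have c0: "0 \<le> Db * K powr (p/2 - 1)" using Db0 Kp by simp
  have "Db * K powr (p/2 - 1) * S \<le> Db * K powr (p/2 - 1) * ((2*X + 2 * K powr (1-p/2) * Ae) / (1 - Cb))"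
    by (rule mult_left_mono[OF Sle c0])
  also have "\<dots> = (2 * Db / (1 - Cb)) * K powr (p / 2 - 1) * X + (2 * Db / (1 - Cb)) * Ae * (K powr (p/2 - 1) * K powr (1-p/2))"
    using C1 by (intro alg1) simp
  also have "K powr (p/2 - 1) * K powr (1-p/2) = 1" using K by (simp flip: powr_add)
  finally have "(Z2+B2+V2) powr (p/2) \<le> (2 * Db / (1 - Cb)) * K powr (p / 2 - 1) * X + (1 + 2 * Db / (1 - Cb)) * Ae"
    using Hb by (simp add: algebra_simps)
  also have "Ae = (2 powr p / (1 - d) powr (p / 2)) * e powr p" unfolding Ae_def by (simp add: powr_mult)
  finally show ?thesis by (simp add: algebra_simps)
qed

lemma mulv_cong: "(\<And>j. j < n \<Longrightarrow> a j = b j) \<Longrightarrow> mulv m n A a = mulv m n A b"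
  unfolding mulv_def by (auto intro!: sum.cong)

lemma norm2_restr_sq:
  assumes "W \<subseteq> {..<n}"
  shows "(norm2 n (restr W h))\<^sup>2 = (\<Sum>i\<in>W. (h i)\<^sup>2)"
proof -
  have "(norm2 n (restr W h))\<^sup>2 = (\<Sum>i<n. (if i \<in> W then (h i)\<^sup>2 else 0))"
    unfolding norm2_sq restr_def by (intro sum.cong) auto
  also have "\<dots> = (\<Sum>i\<in>{..<n} \<inter> W. (h i)\<^sup>2)" by (simp add: sum.inter_restrict)
  also have "{..<n} \<inter> W = W" using assms by auto
  finally show ?thesis .
qed

lemma sparse_restr:
  assumes "W \<subseteq> {..<n}" "card W \<le> s"
  shows "sparse n s (restr W h)"
  unfolding sparse_def
proof
  show "restr W h \<in> vecs n" using assms unfolding vecs_def restr_def by auto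
  have fin: "finite W" using assms(1) finite_subset by blast
  have "{i. i < n \<and> restr W h i \<noteq> 0} \<subseteq> W" unfolding restr_def by (auto split: if_splits)
  then have "card {i. i < n \<and> restr W h i \<noteq> 0} \<le> card W" using fin by (rule card_mono[rotated])
  then show "card {i. i < n \<and> restr W h i \<noteq> 0} \<le> s" using assms by simp
qed

lemma pnorm_pow:
  assumes "0 < p"
  shows "pnorm n p z powr p = (\<Sum>i<n. \<bar>z i\<bar> powr p)"
proof -
  have "0 \<le> (\<Sum>i<n. \<bar>z i\<bar> powr p)" by (simp add: sum_nonneg)
  then show ?thesis unfolding pnorm_def using assms by (simp add: powr_powr)
qed

lemma pnorm_le_sum:
  assumes "0 < p" "pnorm n p a \<le> pnorm n p b"
  shows "(\<Sum>i<n. \<bar>a i\<bar> powr p) \<le> (\<Sum>i<n. \<bar>b i\<bar> powr p)"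
proof -
  have "pnorm n p a powr p \<le> pnorm n p b powr p"
    using assms by (intro powr_mono2) (auto simp: pnorm_def)
  then show ?thesis using assms by (simp add: pnorm_pow)
qed

lemma main_T0:
  fixes k m n :: nat and A :: "nat \<Rightarrow> nat \<Rightarrow> real"
    and x e y xs :: "nat \<Rightarrow> real" and \<epsilon> p \<delta> :: real and T0 :: "nat set"
  assumes k: "k > 0" and n: "n = 4 * k"
    and d0: "0 \<le> \<delta>" and d1: "\<delta> < 1" and dd: "\<delta> = ric m n A (2 * k)"
    and x: "x \<in> vecs n" and eps: "\<epsilon> \<ge> 0" and en: "norm2 m e \<le> \<epsilon>"
    and y: "y = (\<lambda>i. mulv m n A x i + e i)"
    and p: "0 < p" "p < 1"
    and xs: "xs \<in> vecs n"
    and feas: "norm2 m (\<lambda>i. y i - mulv m n A xs i) \<le> \<epsilon>"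
    and opt: "\<forall>\<gamma>\<in>vecs n. norm2 m (\<lambda>i. y i - mulv m n A \<gamma> i) \<le> \<epsilon> \<longrightarrow> pnorm n p xs \<le> pnorm n p \<gamma>"
    and T0: "T0 \<subseteq> {..<n}" "card T0 = k"
    and Cb: "(1 + \<delta>) * 2 powr (p / 2 - 1) * (g p / (1 - \<delta>)) powr (p / 2) < 1"
  shows "norm2 n (\<lambda>i. x i - xs i) powr p
           \<le> (2 * (2 * g p / (1 - \<delta>)) powr (p / 2) / (1 - (1 + \<delta>) * 2 powr (p / 2 - 1) * (g p / (1 - \<delta>)) powr (p / 2))) * real k powr (p / 2 - 1) * (\<Sum>i\<in>{..<n} - T0. \<bar>x i\<bar> powr p)
             + (2 powr p / (1 - \<delta>) powr (p / 2)) * (1 + 2 * (2 * g p / (1 - \<delta>)) powr (p / 2) / (1 - (1 + \<delta>) * 2 powr (p / 2 - 1) * (g p / (1 - \<delta>)) powr (p / 2))) * \<epsilon> powr p"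
proof -
  define h where "h = (\<lambda>i. xs i - x i)"
  define U where "U = {..<n} - T0"
  have finU: "finite U" unfolding U_def by simp
  have finT0: "finite T0" using T0 finite_subset by blast
  have cardU: "card U = 3 * k" unfolding U_def using T0 n finT0 by (simp add: card_Diff_subset)
  obtain T1 where T1: "T1 \<subseteq> U" "card T1 = k" "\<forall>i\<in>T1. \<forall>j\<in>U-T1. \<bar>h j\<bar> \<le> \<bar>h i\<bar>"
    using top_subset[OF finU, of k "\<lambda>i. \<bar>h i\<bar>"] cardU by auto
  define T2 where "T2 = U - T1"
  have finT1: "finite T1" using T1 finU finite_subset by blast
  have finT2: "finite T2" unfolding T2_def using finU by simp
  have cardT2: "card T2 = 2 * k" unfolding T2_def using T1 cardU finT1 by (simp add: card_Diff_subset)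
  have U_split: "U = T1 \<union> T2" "T1 \<inter> T2 = {}" unfolding T2_def using T1 by auto
  have all_split: "{..<n} = T0 \<union> U" "T0 \<inter> U = {}" unfolding U_def using T0 by auto
  define K where "K = real k"
  have Kpos: "0 < K" unfolding K_def using k by simp
  define Z2 where "Z2 = (\<Sum>i\<in>T0. (h i)\<^sup>2)"
  define B2 where "B2 = (\<Sum>i\<in>T1. (h i)\<^sup>2)"
  define V2 where "V2 = (\<Sum>i\<in>T2. (h i)\<^sup>2)"
  define S where "S = (\<Sum>i\<in>U. \<bar>h i\<bar> powr p)"
  define a where "a = (\<Sum>i\<in>T1. \<bar>h i\<bar> powr p)"
  define Sx where "Sx = (\<Sum>i\<in>T0. \<bar>h i\<bar> powr p)"
  define X where "X = (\<Sum>i\<in>U. \<bar>x i\<bar> powr p)"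
  have nn: "0 \<le> Z2" "0 \<le> B2" "0 \<le> V2" unfolding Z2_def B2_def V2_def by (simp_all add: sum_nonneg)
  have a0: "0 \<le> a" unfolding a_def by (simp add: sum_nonneg)
  have SaT2: "S = a + (\<Sum>i\<in>T2. \<bar>h i\<bar> powr p)"
    unfolding S_def a_def U_split(1) using U_split(2) finT1 finT2 by (simp add: sum.union_disjoint)
  have aS: "a \<le> S" using SaT2 by (simp add: sum_nonneg)
  have h3: "a \<le> K powr (1-p/2) * B2 powr (p/2)"
    unfolding a_def B2_def K_def using power_mean[OF finT1 T1(2) k p(1)] p by simp
  have h4: "Sx \<le> K powr (1-p/2) * Z2 powr (p/2)"
    unfolding Sx_def Z2_def K_def using power_mean[OF finT0 T0(2) k p(1)] p by simp
  have h2: "V2 \<le> (S-a)*(a/K) powr (2/p-1)"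
  proof -
    have each: "(h j)\<^sup>2 \<le> \<bar>h j\<bar> powr p * (a/K) powr (2/p-1)" if j: "j \<in> T2" for j
    proof -
      have le: "\<bar>h j\<bar> powr p \<le> \<bar>h i\<bar> powr p" if "i \<in> T1" for i
        using T1(3) that j p unfolding T2_def by (intro powr_mono2) auto
      have "(\<Sum>i\<in>T1. \<bar>h j\<bar> powr p) \<le> a" unfolding a_def by (intro sum_mono le)
      then have "K * \<bar>h j\<bar> powr p \<le> a" using T1(2) unfolding K_def by simp
      then have hj: "\<bar>h j\<bar> powr p \<le> a / K" using Kpos by (simp add: field_simps)
      have "(h j)\<^sup>2 = \<bar>h j\<bar> powr p * (\<bar>h j\<bar> powr p) powr (2/p-1)"
      proof (cases "h j = 0")
        case False
        have "(\<bar>h j\<bar> powr p) powr (2/p-1) = \<bar>h j\<bar> powr (2 - p)"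
        proof -
          have "p * (2/p - 1) = 2 - p" using p by (simp add: field_simps)
          then show ?thesis by (simp add: powr_powr)
        qed
        then have "\<bar>h j\<bar> powr p * (\<bar>h j\<bar> powr p) powr (2/p-1) = \<bar>h j\<bar> powr 2"
          by (simp flip: powr_add)
        then show ?thesis by simp
      qed simp
      also have "\<dots> \<le> \<bar>h j\<bar> powr p * (a/K) powr (2/p-1)"
      proof -
        have "2/p - 1 \<ge> 0" using p by (simp add: field_simps)
        then show ?thesis using hj by (intro mult_left_mono powr_mono2) auto
      qed
      finally show ?thesis .
    qed
    have "V2 \<le> (\<Sum>j\<in>T2. \<bar>h j\<bar> powr p * (a/K) powr (2/p-1))" unfolding V2_def by (intro sum_mono each)
    also have "\<dots> = (S - a) * (a/K) powr (2/p-1)" using SaT2 by (simp add: sum_distrib_right)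
    finally show ?thesis .
  qed
  have h5: "S \<le> Sx + 2*X"
  proof -
    have xfeas: "norm2 m (\<lambda>i. y i - mulv m n A x i) \<le> \<epsilon>" using en y by simp
    have "pnorm n p xs \<le> pnorm n p x" using opt x xfeas by blast
    then have L: "(\<Sum>i<n. \<bar>xs i\<bar> powr p) \<le> (\<Sum>i<n. \<bar>x i\<bar> powr p)" using pnorm_le_sum p by blast
    have sp: "(\<Sum>i<n. F i) = (\<Sum>i\<in>T0. F i) + (\<Sum>i\<in>U. F i)" for F :: "nat \<Rightarrow> real"
      unfolding all_split(1) using all_split(2) finT0 finU by (simp add: sum.union_disjoint)
    have t0: "\<bar>x i\<bar> powr p \<le> \<bar>xs i\<bar> powr p + \<bar>h i\<bar> powr p" for i
      using abs_powr_tri[OF p(1), of "xs i" "- h i"] p unfolding h_def by (simp add: abs_minus_commute)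
    have tU: "\<bar>h i\<bar> powr p \<le> \<bar>xs i\<bar> powr p + \<bar>x i\<bar> powr p" for i
      using abs_powr_tri[OF p(1), of "xs i" "- x i"] p unfolding h_def by simp
    have "(\<Sum>i\<in>T0. \<bar>x i\<bar> powr p) \<le> (\<Sum>i\<in>T0. \<bar>xs i\<bar> powr p) + Sx"
      unfolding Sx_def by (simp add: sum.distrib[symmetric] sum_mono t0)
    moreover have "S \<le> (\<Sum>i\<in>U. \<bar>xs i\<bar> powr p) + X"
      unfolding S_def X_def by (simp add: sum.distrib[symmetric] sum_mono tU)
    ultimately show ?thesis using L unfolding sp X_def by linarith
  qed
  have h1: "(1-\<delta>)*(Z2+B2) \<le> (2*\<epsilon> + sqrt((1+\<delta>)*V2))\<^sup>2"
  proof -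
    define u where "u = restr (T0 \<union> T1) h"
    define v where "v = restr T2 h"
    have T01: "T0 \<union> T1 \<subseteq> {..<n}" using T0 T1 unfolding U_def by auto
    have T2s: "T2 \<subseteq> {..<n}" unfolding T2_def U_def by auto
    have dj: "T0 \<inter> T1 = {}" using T1 unfolding U_def by auto
    have c01: "card (T0 \<union> T1) = 2 * k" using dj finT0 finT1 T0 T1 by (simp add: card_Un_disjoint)
    have su: "sparse n (2*k) u" unfolding u_def using T01 c01 by (intro sparse_restr) auto
    have sv: "sparse n (2*k) v" unfolding v_def using T2s cardT2 by (intro sparse_restr) auto
    have nu: "(norm2 n u)\<^sup>2 = Z2 + B2"
      unfolding u_def norm2_restr_sq[OF T01] Z2_def B2_def using dj finT0 finT1 by (simp add: sum.union_disjoint)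
    have nv: "(norm2 n v)\<^sup>2 = V2" unfolding v_def norm2_restr_sq[OF T2s] V2_def ..
    have huv: "h j = u j + v j" if "j < n" for j
    proof -
      have "j \<in> T0 \<or> j \<in> T1 \<or> j \<in> T2" using that all_split U_split by auto
      moreover have "T0 \<inter> T2 = {}" "T1 \<inter> T2 = {}" using U_split all_split by auto
      ultimately show ?thesis unfolding u_def v_def restr_def using dj by auto
    qed
    have Au: "mulv m n A u = (\<lambda>i. mulv m n A h i + - mulv m n A v i)"
    proof -
      have "mulv m n A u = mulv m n A (\<lambda>j. h j + (- v j))" using huv by (intro mulv_cong) auto
      also have "\<dots> = (\<lambda>i. mulv m n A h i + mulv m n A (\<lambda>j. - v j) i)" by (rule mulv_add)
      also have "mulv m n A (\<lambda>j. - v j) = (\<lambda>i. - mulv m n A v i)" unfolding mulv_def by (auto simp: sum_negf)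
      finally show ?thesis .
    qed
    have Ah: "norm2 m (mulv m n A h) \<le> 2*\<epsilon>"
    proof -
      have "mulv m n A h = (\<lambda>i. e' i + - r i)" if "e' = (\<lambda>i. y i - mulv m n A x i)" "r = (\<lambda>i. y i - mulv m n A xs i)" for e' r
      proof -
        have "mulv m n A h = mulv m n A (\<lambda>j. xs j + - x j)" unfolding h_def by simp
        also have "\<dots> = (\<lambda>i. mulv m n A xs i + mulv m n A (\<lambda>j. - x j) i)" by (rule mulv_add)
        also have "mulv m n A (\<lambda>j. - x j) = (\<lambda>i. - mulv m n A x i)" unfolding mulv_def by (auto simp: sum_negf)
        finally show ?thesis using that by auto
      qed
      then have "mulv m n A h = (\<lambda>i. (\<lambda>i. y i - mulv m n A x i) i + - (\<lambda>i. y i - mulv m n A xs i) i)" by blast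
      then have "norm2 m (mulv m n A h) \<le> norm2 m (\<lambda>i. y i - mulv m n A x i) + norm2 m (\<lambda>i. - (y i - mulv m n A xs i))"
        using norm2_tri[of m "\<lambda>i. y i - mulv m n A x i" "\<lambda>i. - (y i - mulv m n A xs i)"] by simp
      also have "\<dots> = norm2 m e + norm2 m (\<lambda>i. y i - mulv m n A xs i)"
        using y norm2_minus[of m "\<lambda>i. y i - mulv m n A xs i"] by simp
      finally show ?thesis using en feas by linarith
    qed
    have Av: "norm2 m (mulv m n A v) \<le> sqrt((1+\<delta>)*V2)"
    proof -
      have "(norm2 m (mulv m n A v))\<^sup>2 \<le> (1+\<delta>)*V2" using ric_upper[OF sv] nv dd by simp
      then have "sqrt ((norm2 m (mulv m n A v))\<^sup>2) \<le> sqrt((1+\<delta>)*V2)" by (rule real_sqrt_le_mono)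
      then show ?thesis using norm2_nonneg by simp
    qed
    have "norm2 m (mulv m n A u) \<le> norm2 m (mulv m n A h) + norm2 m (\<lambda>i. - mulv m n A v i)"
      unfolding Au by (rule norm2_tri)
    also have "\<dots> \<le> 2*\<epsilon> + sqrt((1+\<delta>)*V2)" unfolding norm2_minus using Ah Av by linarith
    finally have Au2: "norm2 m (mulv m n A u) \<le> 2*\<epsilon> + sqrt((1+\<delta>)*V2)" .
    have "(1-\<delta>)*(Z2+B2) \<le> (norm2 m (mulv m n A u))\<^sup>2" using ric_lower[OF su] nu dd by simp
    also have "\<dots> \<le> (2*\<epsilon> + sqrt((1+\<delta>)*V2))\<^sup>2" using Au2 norm2_nonneg by (intro power_mono) auto
    finally show ?thesis .
  qed
  have C: "(Z2+B2+V2) powr (p/2)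
           \<le> (2 * (2 * g p / (1 - \<delta>)) powr (p / 2) / (1 - (1 + \<delta>) * 2 powr (p / 2 - 1) * (g p / (1 - \<delta>)) powr (p / 2))) * K powr (p / 2 - 1) * X
             + (2 powr p / (1 - \<delta>) powr (p / 2)) * (1 + 2 * (2 * g p / (1 - \<delta>)) powr (p / 2) / (1 - (1 + \<delta>) * 2 powr (p / 2 - 1) * (g p / (1 - \<delta>)) powr (p / 2))) * \<epsilon> powr p"
    by (rule core[OF p d0 d1 Kpos eps a0 aS nn h1 h2 h3 h4 h5 Cb])
  have "norm2 n (\<lambda>i. x i - xs i) = sqrt (Z2+B2+V2)"
  proof -
    have "(\<Sum>i<n. (x i - xs i)\<^sup>2) = (\<Sum>i<n. (h i)\<^sup>2)" unfolding h_def by (simp add: power2_commute)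
    also have "\<dots> = Z2 + (B2 + V2)"
      unfolding all_split(1) Z2_def B2_def V2_def using all_split(2) U_split finT0 finU finT1 finT2
      by (simp add: sum.union_disjoint)
    finally show ?thesis unfolding norm2_def by (simp add: add.assoc)
  qed
  then have "norm2 n (\<lambda>i. x i - xs i) powr p = (Z2+B2+V2) powr (p/2)" using nn by (simp add: powr_sqrt)
  with C show ?thesis unfolding K_def X_def U_def by simp
qed

theorem theorem4:
  fixes k m n :: nat and A :: "nat \<Rightarrow> nat \<Rightarrow> real"
    and x e y xs :: "nat \<Rightarrow> real" and \<epsilon> p :: real
  assumes "k > 0" and "m > 0" and "n = 4 * k"
    and "sqrt 2 / 2 \<le> ric m n A (2 * k)" and "ric m n A (2 * k) < 1"
    and "x \<in> vecs n" and "\<epsilon> \<ge> 0" and "e \<in> vecs m" and "norm2 m e \<le> \<epsilon>"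
    and "y = (\<lambda>i. mulv m n A x i + e i)"
    and "0 < p" and "p < 1"
    and "xs \<in> vecs n"
    and "norm2 m (\<lambda>i. y i - mulv m n A xs i) \<le> \<epsilon>"
    and "\<forall>\<gamma>\<in>vecs n. norm2 m (\<lambda>i. y i - mulv m n A \<gamma> i) \<le> \<epsilon> \<longrightarrow> pnorm n p xs \<le> pnorm n p \<gamma>"
  defines "\<delta> \<equiv> ric m n A (2 * k)"
  defines "Cb \<equiv> (1 + \<delta>) * 2 powr (p / 2 - 1) * (g p / (1 - \<delta>)) powr (p / 2)"
  defines "Db \<equiv> (2 * g p / (1 - \<delta>)) powr (p / 2)"
  assumes "Cb < 1"
  shows "norm2 n (\<lambda>i. x i - xs i) powr p
           \<le> (2 * Db / (1 - Cb)) * real k powr (p / 2 - 1) * pnorm n p (restr {k..<n} x) powr p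
             + (2 powr p / (1 - \<delta>) powr (p / 2)) * (1 + 2 * Db / (1 - Cb)) * \<epsilon> powr p
     \<and> ((\<epsilon> = 0 \<and> sparse n k x) \<longrightarrow> xs = x)"
proof -
  note as = assms
  have d0: "0 \<le> \<delta>" using as(4) unfolding \<delta>_def[symmetric] by (smt (verit) real_sqrt_ge_zero divide_nonneg_pos)
  have d1: "\<delta> < 1" using as(5) unfolding \<delta>_def .
  have dd: "\<delta> = ric m n A (2 * k)" unfolding \<delta>_def ..
  have Cb1: "(1 + \<delta>) * 2 powr (p / 2 - 1) * (g p / (1 - \<delta>)) powr (p / 2) < 1" using as(19) unfolding Cb_def .
  have M: "T0 \<subseteq> {..<n} \<Longrightarrow> card T0 = k \<Longrightarrow> norm2 n (\<lambda>i. x i - xs i) powr p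
           \<le> (2 * Db / (1 - Cb)) * real k powr (p / 2 - 1) * (\<Sum>i\<in>{..<n} - T0. \<bar>x i\<bar> powr p)
             + (2 powr p / (1 - \<delta>) powr (p / 2)) * (1 + 2 * Db / (1 - Cb)) * \<epsilon> powr p" for T0
    unfolding Cb_def Db_def
    by (rule main_T0[OF as(1,3) d0 d1 dd as(6,7,9,10,11,12,13,14,15) _ _ Cb1])
  have P1: "norm2 n (\<lambda>i. x i - xs i) powr p
           \<le> (2 * Db / (1 - Cb)) * real k powr (p / 2 - 1) * pnorm n p (restr {k..<n} x) powr p
             + (2 powr p / (1 - \<delta>) powr (p / 2)) * (1 + 2 * Db / (1 - Cb)) * \<epsilon> powr p"
  proof -
    have "pnorm n p (restr {k..<n} x) powr p = (\<Sum>i<n. \<bar>restr {k..<n} x i\<bar> powr p)"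
      using as(11) by (rule pnorm_pow)
    also have "\<dots> = (\<Sum>i<n. if i \<in> {k..<n} then \<bar>x i\<bar> powr p else 0)"
      unfolding restr_def by (intro sum.cong) auto
    also have "\<dots> = (\<Sum>i\<in>{..<n} \<inter> {k..<n}. \<bar>x i\<bar> powr p)" by (simp add: sum.inter_restrict)
    also have "{..<n} \<inter> {k..<n} = {..<n} - {..<k}" by auto
    finally have "pnorm n p (restr {k..<n} x) powr p = (\<Sum>i\<in>{..<n} - {..<k}. \<bar>x i\<bar> powr p)" .
    moreover have "{..<k} \<subseteq> {..<n}" using as(3) by auto
    ultimately show ?thesis using M[of "{..<k}"] by simp
  qed
  have P2: "xs = x" if z: "\<epsilon> = 0" and sp: "sparse n k x"
  proof -
    define supp where "supp = {i. i < n \<and> x i \<noteq> 0}"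
    have cs: "card supp \<le> k" using sp unfolding sparse_def supp_def by simp
    have ssub: "supp \<subseteq> {..<n}" unfolding supp_def by auto
    have fs: "finite supp" using ssub finite_subset by blast
    have "card ({..<n} - supp) = n - card supp" using ssub fs by (simp add: card_Diff_subset)
    then have "k - card supp \<le> card ({..<n} - supp)" using as(3) by simp
    then obtain R where R: "R \<subseteq> {..<n} - supp" "card R = k - card supp"
      using obtain_subset_with_card_n by metis
    define T0 where "T0 = supp \<union> R"
    have fR: "finite R" using R(1) finite_subset by blast
    have T0s: "T0 \<subseteq> {..<n}" unfolding T0_def using ssub R by auto
    have cT0: "card T0 = k" unfolding T0_def using R fR fs cs by (subst card_Un_disjoint) auto
    have X0: "(\<Sum>i\<in>{..<n} - T0. \<bar>x i\<bar> powr p) = 0"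
      by (intro sum.neutral) (auto simp: T0_def supp_def)
    have "norm2 n (\<lambda>i. x i - xs i) powr p \<le> 0" using M[OF T0s cT0] unfolding X0 z by simp
    then have "norm2 n (\<lambda>i. x i - xs i) = 0" using norm2_nonneg
      by (metis order_antisym powr_eq_0_iff powr_ge_zero)
    then have "(\<Sum>i<n. (x i - xs i)\<^sup>2) = 0" unfolding norm2_def by simp
    then have "\<forall>i\<in>{..<n}. (x i - xs i)\<^sup>2 = 0" by (simp add: sum_nonneg_eq_0_iff)
    then have "\<forall>i<n. xs i = x i" by simp
    moreover have "\<forall>i\<ge>n. xs i = x i" using as(6,13) unfolding vecs_def by simp
    ultimately show ?thesis by (metis not_le ext)
  qed
  show ?thesis using P1 P2 by blast
qed

end
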